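(* Fix $n\ge 2$, a dictator agent $t\in\{1,\dots,n\}$ and a parameter $\varepsilon\in(0,\frac12)$, and let $g$ be any function assigning to each profile $\mathbf{x}\in\mathbb{R}^n$ a point $g(\mathbf{x})\in(-\infty,\,x_l-L)\cup(x_l+2L,\,+\infty)$, where $x_l=\min\mathbf{x}$, $x_r=\max\mathbf{x}$, $L=x_r-x_l$. Let $f$ be the mechanism that on $\mathbf{x}$ outputs $l_1=x_t$ and $$l_2=\begin{cases} x_t+\max\left\{\left(\tfrac{2}{\varepsilon}-2\right)(x_t-x_l),\; x_r-x_t\right\} & \text{if } x_t\in[x_l,\,x_l+\varepsilon L],\\[2pt] g(\mathbf{x}) & \text{if } x_t\in(x_l+\varepsilon L,\,x_l+(1-\varepsilon)L),\\[2pt] x_t-\max\left\{x_t-x_l,\; \left(\tfrac{2}{\varepsilon}-2\right)(x_r-x_t)\right\} & \text{if } x_t\in[x_l+(1-\varepsilon)L,\,x_r] \text{ and not in the first case}.\end{cases}$$ Then for every profile $\mathbf{x}\in\mathbb{R}^n$, $SC(f,\mathbf{x})\le\left(\frac{1}{\varepsilon}-1\right)(n-1)\,OPT(\mathbf{x})$.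
   Context: Two-facility game on a line: agent $i$ has location $x_i\in\mathbb{R}$. For facility locations $\{l_1,l_2\}$, an agent at $y$ has cost $\min\{|l_1-y|,|l_2-y|\}$. $SC(f,\mathbf{x})$ is the sum over all agents of their costs under $f(\mathbf{x})$, and $OPT(\mathbf{x})=\min_{l_1,l_2\in\mathbb{R}}\sum_i\min\{|l_1-x_i|,|l_2-x_i|\}$. *)

theory Defs
  imports "HOL-Analysis.Analysis"
begin

text \<open>Profiles: agents are indexed by 0..<n, the location of agent i is x i.\<close>

definition agent_cost :: "real \<Rightarrow> real \<Rightarrow> real \<Rightarrow> real" where
  "agent_cost l1 l2 y = min \<bar>l1 - y\<bar> \<bar>l2 - y\<bar>"

definition SC :: "nat \<Rightarrow> (real \<times> real) \<Rightarrow> (nat \<Rightarrow> real) \<Rightarrow> real" where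
  "SC n ls x = (\<Sum>i<n. agent_cost (fst ls) (snd ls) (x i))"

definition OPT :: "nat \<Rightarrow> (nat \<Rightarrow> real) \<Rightarrow> real" where
  "OPT n x = (INF p \<in> (UNIV :: (real \<times> real) set). SC n p x)"

definition xmin :: "nat \<Rightarrow> (nat \<Rightarrow> real) \<Rightarrow> real" where
  "xmin n x = Min (x ` {..<n})"

definition xmax :: "nat \<Rightarrow> (nat \<Rightarrow> real) \<Rightarrow> real" where
  "xmax n x = Max (x ` {..<n})"

definition mech :: "nat \<Rightarrow> nat \<Rightarrow> real \<Rightarrow> ((nat \<Rightarrow> real) \<Rightarrow> real) \<Rightarrow> (nat \<Rightarrow> real) \<Rightarrow> real \<times> real" where
  "mech n t \<epsilon> g x =
    (let xl = xmin n x; xr = xmax n x; L = xr - xl; xt = x t in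
     (xt,
      if xl \<le> xt \<and> xt \<le> xl + \<epsilon> * L then xt + max ((2 / \<epsilon> - 2) * (xt - xl)) (xr - xt)
      else if xl + \<epsilon> * L < xt \<and> xt < xl + (1 - \<epsilon>) * L then g x
      else xt - max (xt - xl) ((2 / \<epsilon> - 2) * (xr - xt))))"

end

theory Submission
  imports Defs
begin

lemma three_pts:
  fixes a b p q r :: real
  assumes "p < q" "q < r"
  shows "min (q - p) (r - q) \<le> agent_cost a b p + agent_cost a b q + agent_cost a b r"
  using assms unfolding agent_cost_def by (smt (verit))

lemma agent_cost_nonneg: "0 \<le> agent_cost a b y"
  unfolding agent_cost_def by simp

lemma SC_nonneg: "0 \<le> SC n p x"
  unfolding SC_def by (intro sum_nonneg) (simp add: agent_cost_nonneg)

lemma three_lb: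
  assumes "i < n" "j < n" "k < n" "x i \<le> x j" "x j \<le> x k"
  shows "min (x j - x i) (x k - x j) \<le> SC n p x"
proof (cases "x i = x j \<or> x j = x k")
  case True
  then show ?thesis using SC_nonneg[of n p x] by auto
next
  case False
  then have lt: "x i < x j" "x j < x k" using assms by auto
  then have d: "i \<noteq> j" "j \<noteq> k" "i \<noteq> k" by auto
  have "min (x j - x i) (x k - x j) \<le> (\<Sum>m\<in>{i,j,k}. agent_cost (fst p) (snd p) (x m))"
    using three_pts[OF lt, of "fst p" "snd p"] d by simp
  also have "\<dots> \<le> SC n p x" unfolding SC_def
    by (rule sum_mono2) (use assms in \<open>auto simp: agent_cost_nonneg\<close>)
  finally show ?thesis .
qed

lemma cost_le1: "agent_cost a b y \<le> \<bar>a - y\<bar>" unfolding agent_cost_def by simp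
lemma cost_le2: "agent_cost a b y \<le> \<bar>b - y\<bar>" unfolding agent_cost_def by simp

lemma per_agent:
  fixes n t :: nat and \<epsilon> :: real and g :: "(nat \<Rightarrow> real) \<Rightarrow> real"
  assumes "n \<ge> 2" and "t < n" and "0 < \<epsilon>" and "\<epsilon> < 1/2" and "i < n"
  shows "agent_cost (fst (mech n t \<epsilon> g x)) (snd (mech n t \<epsilon> g x)) (x i)
          \<le> (1/\<epsilon> - 1) * SC n p x"
proof -
  define xl where "xl = xmin n x"
  define xr where "xr = xmax n x"
  define L where "L = xr - xl"
  define xt where "xt = x t"
  define c where "c = 1/\<epsilon> - 1"
  define D where "D = SC n p x"
  have fin: "finite (x ` {..<n})" and ne: "x ` {..<n} \<noteq> {}" using assms by auto
  have lo: "\<And>j. j < n \<Longrightarrow> xl \<le> x j" unfolding xl_def xmin_def using fin by auto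
  have hi: "\<And>j. j < n \<Longrightarrow> x j \<le> xr" unfolding xr_def xmax_def using fin by auto
  obtain il where il: "il < n" "x il = xl" unfolding xl_def xmin_def
    using Min_in[OF fin ne] by auto
  obtain ir where ir: "ir < n" "x ir = xr" unfolding xr_def xmax_def
    using Max_in[OF fin ne] by auto
  have D0: "0 \<le> D" unfolding D_def by (rule SC_nonneg)
  have c1: "1 \<le> c" unfolding c_def using assms by (simp add: field_simps)
  have c2: "2/\<epsilon> - 2 = 2 * c" unfolding c_def by simp
  have cD: "D \<le> c * D" using mult_right_mono[OF c1 D0] by simp
  have xi: "xl \<le> x i" "x i \<le> xr" using lo hi assms by auto
  have xtb: "xl \<le> xt" "xt \<le> xr" using lo hi assms unfolding xt_def by auto
  have L0: "0 \<le> L" using xtb unfolding L_def by simp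
  have eL: "\<epsilon> * L \<le> (1 - \<epsilon>) * L" using L0 assms by (intro mult_right_mono) auto
  have tri: "min (xt - xl) (xr - xt) \<le> D"
    using three_lb[of il n t ir x p] il ir assms xtb unfolding xt_def D_def by auto
  have mech: "mech n t \<epsilon> g x = (xt,
      if xl \<le> xt \<and> xt \<le> xl + \<epsilon> * L then xt + max ((2 * c) * (xt - xl)) (xr - xt)
      else if xl + \<epsilon> * L < xt \<and> xt < xl + (1 - \<epsilon>) * L then g x
      else xt - max (xt - xl) ((2 * c) * (xr - xt)))"
    unfolding mech_def Let_def xl_def xr_def L_def xt_def c2 by simp
  show ?thesis
  proof (cases "xl \<le> xt \<and> xt \<le> xl + \<epsilon> * L")
    case C1: True
    define l2 where "l2 = xt + max ((2 * c) * (xt - xl)) (xr - xt)"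
    have m: "mech n t \<epsilon> g x = (xt, l2)" using mech C1 l2_def by simp
    have dD: "xt - xl \<le> D" using tri C1 eL unfolding L_def by (auto simp: algebra_simps)
    show ?thesis
    proof (cases "x i \<le> xt")
      case True
      have "agent_cost xt l2 (x i) \<le> xt - x i" using cost_le1[of xt l2 "x i"] True by simp
      also have "\<dots> \<le> c * D" using dD cD xi by linarith
      finally show ?thesis using m c_def D_def by simp
    next
      case False
      show ?thesis
      proof (cases "(2 * c) * (xt - xl) \<le> xr - xt")
        case True
        then have "l2 = xr" unfolding l2_def by simp
        have "agent_cost xt l2 (x i) \<le> min (x i - xt) (xr - x i)"
          using cost_le1[of xt l2 "x i"] cost_le2[of xt l2 "x i"] False xi \<open>l2 = xr\<close> by simp
        also have "\<dots> \<le> D" using three_lb[of t n i ir x p] assms ir False xi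
          unfolding xt_def D_def by auto
        finally show ?thesis using m c_def D_def cD by simp
      next
        case False2: False
        then have l2e: "l2 = xt + 2 * c * (xt - xl)" unfolding l2_def by simp
        have "agent_cost xt l2 (x i) \<le> min (x i - xt) (l2 - x i)"
          using cost_le1[of xt l2 "x i"] cost_le2[of xt l2 "x i"] False False2 xi l2e by simp
        also have "\<dots> \<le> c * (xt - xl)" using l2e by simp
        also have "\<dots> \<le> c * D" using dD c1 by (intro mult_left_mono) auto
        finally show ?thesis using m c_def D_def by simp
      qed
    qed
  next
    case NC1: False
    show ?thesis
    proof (cases "xl + \<epsilon> * L < xt \<and> xt < xl + (1 - \<epsilon>) * L")
      case C2: True
      have m: "fst (mech n t \<epsilon> g x) = xt" using mech by simp
      define mm where "mm = min (xt - xl) (xr - xt)"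
      have mD: "mm \<le> D" using tri mm_def by simp
      have mgt: "\<epsilon> * L < mm" using C2 unfolding mm_def L_def by (auto simp: algebra_simps)
      have "L \<le> mm / \<epsilon>" using mgt assms by (simp add: field_simps)
      then have Lm: "L - mm \<le> c * mm" unfolding c_def by (simp add: algebra_simps)
      have "agent_cost xt (snd (mech n t \<epsilon> g x)) (x i) \<le> \<bar>xt - x i\<bar>" by (rule cost_le1)
      also have "\<dots> \<le> L - mm" using xi xtb unfolding mm_def L_def by auto
      also have "\<dots> \<le> c * mm" by (rule Lm)
      also have "\<dots> \<le> c * D" using mD c1 by (intro mult_left_mono) auto
      finally show ?thesis using m c_def D_def by simp
    next
      case NC2: False
      define l2 where "l2 = xt - max (xt - xl) ((2 * c) * (xr - xt))"
      have m: "mech n t \<epsilon> g x = (xt, l2)" using mech NC1 NC2 l2_def by simp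
      have C3: "xl + (1 - \<epsilon>) * L \<le> xt" using NC1 NC2 xtb eL by auto
      have eD: "xr - xt \<le> D" using tri C3 eL unfolding L_def by (auto simp: algebra_simps)
      show ?thesis
      proof (cases "xt \<le> x i")
        case True
        have "agent_cost xt l2 (x i) \<le> x i - xt" using cost_le1[of xt l2 "x i"] True by simp
        also have "\<dots> \<le> c * D" using eD cD xi by linarith
        finally show ?thesis using m c_def D_def by simp
      next
        case False
        show ?thesis
        proof (cases "(2 * c) * (xr - xt) \<le> xt - xl")
          case True
          then have "l2 = xl" unfolding l2_def by simp
          have "agent_cost xt l2 (x i) \<le> min (x i - xl) (xt - x i)"
            using cost_le1[of xt l2 "x i"] cost_le2[of xt l2 "x i"] False xi \<open>l2 = xl\<close> by simp
          also have "\<dots> \<le> D" using three_lb[of il n i t x p] assms il False xi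
            unfolding xt_def D_def by auto
          finally show ?thesis using m c_def D_def cD by simp
        next
          case False2: False
          then have l2e: "l2 = xt - 2 * c * (xr - xt)" unfolding l2_def by simp
          have "agent_cost xt l2 (x i) \<le> min (xt - x i) (x i - l2)"
            using cost_le1[of xt l2 "x i"] cost_le2[of xt l2 "x i"] False False2 xi l2e by simp
          also have "\<dots> \<le> c * (xr - xt)" using l2e by simp
          also have "\<dots> \<le> c * D" using eD c1 by (intro mult_left_mono) auto
          finally show ?thesis using m c_def D_def by simp
        qed
      qed
    qed
  qed
qed

theorem theorem6:
  fixes n t :: nat and \<epsilon> :: real and g :: "(nat \<Rightarrow> real) \<Rightarrow> real"
  assumes "n \<ge> 2" and "t < n" and "0 < \<epsilon>" and "\<epsilon> < 1/2"
    and "\<And>x. g x < xmin n x - (xmax n x - xmin n x)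
             \<or> g x > xmin n x + 2 * (xmax n x - xmin n x)"
  shows "\<forall>x :: nat \<Rightarrow> real.
           SC n (mech n t \<epsilon> g x) x \<le> (1 / \<epsilon> - 1) * real (n - 1) * OPT n x"
proof
  fix x :: "nat \<Rightarrow> real"
  define c where "c = 1/\<epsilon> - 1"
  define K where "K = c * real (n - 1)"
  have c1: "1 \<le> c" unfolding c_def using assms by (simp add: field_simps)
  have Kpos: "0 < K" unfolding K_def using c1 assms by auto
  have t0: "agent_cost (fst (mech n t \<epsilon> g x)) (snd (mech n t \<epsilon> g x)) (x t) = 0"
    unfolding mech_def Let_def agent_cost_def by simp
  have bound: "SC n (mech n t \<epsilon> g x) x \<le> K * SC n p x" for p
  proof -
    have "SC n (mech n t \<epsilon> g x) x =
       (\<Sum>i\<in>{..<n} - {t}. agent_cost (fst (mech n t \<epsilon> g x)) (snd (mech n t \<epsilon> g x)) (x i))"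
      unfolding SC_def using sum.remove[of "{..<n}" t "\<lambda>i. agent_cost (fst (mech n t \<epsilon> g x)) (snd (mech n t \<epsilon> g x)) (x i)"] t0 assms by simp
    also have "\<dots> \<le> of_nat (card ({..<n} - {t})) * (c * SC n p x)"
      by (rule sum_bounded_above) (use per_agent[OF assms(1-4)] c_def in auto)
    also have "\<dots> = K * SC n p x" unfolding K_def using assms by simp
    finally show ?thesis .
  qed
  have "SC n (mech n t \<epsilon> g x) x / K \<le> OPT n x" unfolding OPT_def
    by (rule cINF_greatest) (use bound Kpos in \<open>auto simp: field_simps mult.commute\<close>)
  then show "SC n (mech n t \<epsilon> g x) x \<le> (1 / \<epsilon> - 1) * real (n - 1) * OPT n x"
  proof -
    have "SC n (mech n t \<epsilon> g x) x = K * (SC n (mech n t \<epsilon> g x) x / K)" using Kpos by simp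
    also have "\<dots> \<le> K * OPT n x" using Kpos \<open>_ / K \<le> OPT n x\<close> by (intro mult_left_mono) auto
    finally show ?thesis unfolding K_def c_def .
  qed
qed

end
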